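(* Let $a\ge 3$ and $A=\begin{pmatrix}0&a&-2\\-a&0&a\\2&-a&0\end{pmatrix}$, with initial cluster $(x_1,x_2,x_3)$. For $k\ge1$ let $(3,1)_k$ denote the alternating mutation path of length $k$ whose first mutation is in direction $1$, i.e. $[1]$, $[3,1]$, $[1,3,1]$, $[3,1,3,1]$, and so on. Then for all $k\ge 1$, $\mathbf{d}(\operatorname{var}_A[(3,1)_k]) < \mathbf{d}(\operatorname{var}_A[(3,1)_{k+1}])$.
   Context: Matrix mutation: $\mu_k(B)=(b'_{ij})$ with $b'_{ij}=-b_{ij}$ if $i=k$ or $j=k$, $b'_{ij}=b_{ij}+\operatorname{sgn}(b_{ik})\max(b_{ik}b_{kj},0)$ otherwise. A seed $((x_1,x_2,x_3),B)$ mutates in direction $k$ to $(x',\mu_kB)$ with $x'_j=x_j$ ($j\ne k$), $x'_k=\big(\prod_{b_{ik}>0}x_i^{b_{ik}}+\prod_{b_{ik}<0}x_i^{-b_{ik}}\big)/x_k$. For a mutation path (mutations applied right to left), $\operatorname{var}_A[\cdot]$ is the cluster variable newly created by the last mutation, starting from the seed $((x_1,x_2,x_3),A)$. The denominator vector $\mathbf{d}(z)=(d_1,d_2,d_3)$ of a cluster variable $z$ is defined by writing $z=N(x_1,x_2,x_3)/(x_1^{d_1}x_2^{d_2}x_3^{d_3})$ with $N$ a polynomial not divisible by any $x_i$ (so $\mathbf{d}(x_i)=-e_i$). The order on denominator vectors is componentwise: $u<v$ means $u_i\le v_i$ for all $i$ and $u\ne v$. *)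

theory Defs
  imports Complex_Main
begin

(* Exchange matrices: indices 1,2,3 (entries outside are irrelevant). *)
type_synonym exmat = "nat \<Rightarrow> nat \<Rightarrow> int"

(* Cluster variables are represented as the rational functions they are, evaluated
   on the positive orthant: a point p gives the values p 1, p 2, p 3 of x1,x2,x3. *)
type_synonym ratfun = "(nat \<Rightarrow> real) \<Rightarrow> real"
type_synonym cluster = "nat \<Rightarrow> ratfun"
type_synonym seed = "cluster \<times> exmat"

definition mut_mat :: "nat \<Rightarrow> exmat \<Rightarrow> exmat" where
  "mut_mat k B = (\<lambda>i j. if i = k \<or> j = k then - B i j
                        else B i j + sgn (B i k) * max (B i k * B k j) 0)"

definition mut_clu :: "nat \<Rightarrow> exmat \<Rightarrow> cluster \<Rightarrow> cluster" where
  "mut_clu k B x = x(k := (\<lambda>p.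
      ((\<Prod>i\<in>{i\<in>{1,2,3}. B i k > 0}. x i p ^ nat (B i k))
     + (\<Prod>i\<in>{i\<in>{1,2,3}. B i k < 0}. x i p ^ nat (- B i k))) / x k p))"

definition mut_seed :: "nat \<Rightarrow> seed \<Rightarrow> seed" where
  "mut_seed k s = (mut_clu k (snd s) (fst s), mut_mat k (snd s))"

(* mutation path, applied right to left *)
definition path_seed :: "nat list \<Rightarrow> seed \<Rightarrow> seed" where
  "path_seed ks s = foldr mut_seed ks s"

definition init_clu :: cluster where
  "init_clu = (\<lambda>i p. p i)"

(* var_A[ks]: cluster variable created by the last (leftmost) mutation *)
definition var :: "exmat \<Rightarrow> nat list \<Rightarrow> ratfun" where
  "var A ks = fst (path_seed ks (init_clu, A)) (hd ks)"

(* alternating path (3,1)_k of length k, first (rightmost) mutation in direction 1 *)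
definition alt31 :: "nat \<Rightarrow> nat list" where
  "alt31 k = map (\<lambda>j. if even j then 1 else 3) (rev [0..<k])"

definition posp :: "(nat \<Rightarrow> real) \<Rightarrow> bool" where
  "posp p \<longleftrightarrow> p 1 > 0 \<and> p 2 > 0 \<and> p 3 > 0"

(* z = N / (x1^d1 x2^d2 x3^d3) with N a polynomial (coefficients c on exponent triples)
   not divisible by any x_i *)
definition is_dvec :: "ratfun \<Rightarrow> int \<times> int \<times> int \<Rightarrow> bool" where
  "is_dvec z d \<longleftrightarrow> (\<exists>c :: nat \<times> nat \<times> nat \<Rightarrow> real.
      finite {m. c m \<noteq> 0}
    \<and> (\<exists>m. c m \<noteq> 0 \<and> fst m = 0)
    \<and> (\<exists>m. c m \<noteq> 0 \<and> fst (snd m) = 0)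
    \<and> (\<exists>m. c m \<noteq> 0 \<and> snd (snd m) = 0)
    \<and> (\<forall>p. posp p \<longrightarrow>
          z p = (\<Sum>m\<in>{m. c m \<noteq> 0}. c m * p 1 ^ fst m * p 2 ^ fst (snd m) * p 3 ^ snd (snd m))
                / (p 1 powi fst d * p 2 powi fst (snd d) * p 3 powi snd (snd d))))"

definition dvec :: "ratfun \<Rightarrow> int \<times> int \<times> int" where
  "dvec z = (THE d. is_dvec z d)"

definition dless :: "int \<times> int \<times> int \<Rightarrow> int \<times> int \<times> int \<Rightarrow> bool" where
  "dless u v \<longleftrightarrow> fst u \<le> fst v \<and> fst (snd u) \<le> fst (snd v) \<and> snd (snd u) \<le> snd (snd v) \<and> u \<noteq> v"

definition Amat :: "int \<Rightarrow> exmat" where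
  "Amat a = (\<lambda>i j.
     if (i,j) = (1,2) then a else if (i,j) = (1,3) then -2 else
     if (i,j) = (2,1) then -a else if (i,j) = (2,3) then a else
     if (i,j) = (3,1) then 2 else if (i,j) = (3,2) then -a else 0)"

end

theory Submission imports Defs "HOL-Computational_Algebra.Polynomial" begin

lemma poly1:
  fixes c :: "nat \<Rightarrow> real"
  assumes "finite S" and "\<forall>t>0. (\<Sum>j\<in>S. c j * t ^ j) = 0"
  shows "\<forall>j\<in>S. c j = 0"
proof -
  define P where "P = (\<Sum>j\<in>S. monom (c j) j)"
  have ev: "poly P t = (\<Sum>j\<in>S. c j * t ^ j)" for t
    unfolding P_def poly_sum by (simp add: poly_monom)
  have "P = 0"
  proof (rule ccontr)
    assume "P \<noteq> 0"
    then have "finite {x. poly P x = 0}" by (rule poly_roots_finite)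
    moreover have "{0<..} \<subseteq> {x. poly P x = 0}" using assms(2) ev by auto
    ultimately have "finite ({0<..} :: real set)" by (rule finite_subset[rotated])
    thus False using infinite_Ioi by blast
  qed
  have co: "coeff P j = (if j \<in> S then c j else 0)" for j
    unfolding P_def coeff_sum using assms(1) by (simp add: if_distrib sum.delta cong: if_cong)
  show ?thesis using co[unfolded \<open>P = 0\<close>] by (metis coeff_0)
qed

lemma lift:
  fixes c :: "nat \<times> 'b \<Rightarrow> real" and f :: "'b \<Rightarrow> 'q \<Rightarrow> real"
  assumes H: "\<And>T d. finite T \<Longrightarrow> (\<forall>q\<in>Q. (\<Sum>b\<in>T. d b * f b q) = 0) \<Longrightarrow> (\<forall>b\<in>T. d b = 0)"
  and fin: "finite S"
  and Z: "\<forall>t>0. \<forall>q\<in>Q. (\<Sum>m\<in>S. c m * t ^ (fst m) * f (snd m) q) = 0"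
  shows "\<forall>m\<in>S. c m = 0"
proof -
  have inner: "(\<Sum>m\<in>{m\<in>S. fst m = j}. c m * f (snd m) q) = 0" if q: "q \<in> Q" and j: "j \<in> fst ` S" for q j
  proof -
    have "\<forall>t>0. (\<Sum>j\<in>fst ` S. (\<Sum>m\<in>{m\<in>S. fst m = j}. c m * f (snd m) q) * t ^ j) = 0"
    proof (intro allI impI)
      fix t :: real assume "t > 0"
      have "(\<Sum>m\<in>S. c m * t ^ (fst m) * f (snd m) q) =
            (\<Sum>j\<in>fst ` S. (\<Sum>m\<in>{m\<in>S. fst m = j}. c m * t ^ (fst m) * f (snd m) q))"
        by (rule sum.image_gen[OF fin])
      also have "\<dots> = (\<Sum>j\<in>fst ` S. (\<Sum>m\<in>{m\<in>S. fst m = j}. c m * f (snd m) q) * t ^ j)"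
        by (intro sum.cong refl) (auto simp: sum_distrib_right intro!: sum.cong)
      finally show "(\<Sum>j\<in>fst ` S. (\<Sum>m\<in>{m\<in>S. fst m = j}. c m * f (snd m) q) * t ^ j) = 0"
        using Z \<open>t > 0\<close> q by simp
    qed
    then have "\<forall>j\<in>fst ` S. (\<Sum>m\<in>{m\<in>S. fst m = j}. c m * f (snd m) q) = 0"
      using poly1[of "fst ` S" "\<lambda>j. (\<Sum>m\<in>{m\<in>S. fst m = j}. c m * f (snd m) q)"] fin
      by (simp add: mult.commute)
    thus ?thesis using j by blast
  qed
  show ?thesis
  proof
    fix m assume m: "m \<in> S"
    obtain j b where mjb: "m = (j, b)" by (cases m)
    define T where "T = snd ` {m\<in>S. fst m = j}"
    have finT: "finite T" unfolding T_def using fin by simp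
    have eq: "{m\<in>S. fst m = j} = (\<lambda>b. (j, b)) ` T" unfolding T_def by force
    have "\<forall>q\<in>Q. (\<Sum>b\<in>T. c (j, b) * f b q) = 0"
    proof
      fix q assume q: "q \<in> Q"
      have "(\<Sum>b\<in>T. c (j, b) * f b q) = (\<Sum>m\<in>{m\<in>S. fst m = j}. c m * f (snd m) q)"
        unfolding eq by (subst sum.reindex) (auto simp: inj_on_def)
      also have "\<dots> = 0" using inner[OF q] m mjb by force
      finally show "(\<Sum>b\<in>T. c (j, b) * f b q) = 0" .
    qed
    then have "\<forall>b\<in>T. c (j, b) = 0" using H[OF finT, of "\<lambda>b. c (j, b)"] by blast
    moreover have "b \<in> T" unfolding T_def using m mjb by force
    ultimately show "c m = 0" using mjb by simp
  qed
qed

lemma poly2: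
  fixes c :: "nat \<times> nat \<Rightarrow> real"
  assumes "finite S" and "\<forall>t>0. \<forall>q\<in>{0<..}. (\<Sum>m\<in>S. c m * t ^ (fst m) * q ^ (snd m)) = 0"
  shows "\<forall>m\<in>S. c m = 0"
  by (rule lift[where f = "\<lambda>b q. q ^ b" and Q = "{0<..}", OF _ assms])
     (use poly1 in auto)

lemma poly3:
  fixes c :: "nat \<times> nat \<times> nat \<Rightarrow> real"
  assumes fin: "finite S" and Z: "\<forall>p. posp p \<longrightarrow>
     (\<Sum>m\<in>S. c m * p 1 ^ fst m * p 2 ^ fst (snd m) * p 3 ^ snd (snd m)) = 0"
  shows "\<forall>m\<in>S. c m = 0"
proof (rule lift[where f = "\<lambda>b q. fst q ^ fst b * snd q ^ snd b" and Q = "{0<..} \<times> {0<..}", OF _ fin])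
  fix T and d :: "nat \<times> nat \<Rightarrow> real"
  assume "finite T" "\<forall>q\<in>{0<..} \<times> {0<..}. (\<Sum>b\<in>T. d b * (fst q ^ fst b * snd q ^ snd b)) = 0"
  then show "\<forall>b\<in>T. d b = 0"
    using poly2[of T d] by (auto simp: mult.assoc)
next
  show "\<forall>t>0. \<forall>q\<in>{0<..} \<times> {0<..}. (\<Sum>m\<in>S. c m * t ^ fst m * (fst q ^ fst (snd m) * snd q ^ snd (snd m))) = 0"
  proof (intro allI impI ballI)
    fix t :: real and q :: "real \<times> real" assume t: "t > 0" and q: "q \<in> {0<..} \<times> {0<..}"
    define p where "p = (\<lambda>i::nat. if i = 1 then t else if i = 2 then fst q else snd q)"
    have "posp p" using t q unfolding posp_def p_def by auto
    then have "(\<Sum>m\<in>S. c m * p 1 ^ fst m * p 2 ^ fst (snd m) * p 3 ^ snd (snd m)) = 0" using Z by blast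
    then show "(\<Sum>m\<in>S. c m * t ^ fst m * (fst q ^ fst (snd m) * snd q ^ snd (snd m))) = 0"
      by (simp add: p_def mult.assoc)
  qed
qed


type_synonym tri = "nat \<times> nat \<times> nat"

definition mon :: "tri \<Rightarrow> (nat \<Rightarrow> real) \<Rightarrow> real" where
  "mon m p = p 1 ^ fst m * p 2 ^ fst (snd m) * p 3 ^ snd (snd m)"
definition ev :: "(tri \<Rightarrow> real) \<Rightarrow> (nat \<Rightarrow> real) \<Rightarrow> real" where
  "ev c p = (\<Sum>m\<in>{m. c m \<noteq> 0}. c m * p 1 ^ fst m * p 2 ^ fst (snd m) * p 3 ^ snd (snd m))"
definition add3 :: "tri \<Rightarrow> tri \<Rightarrow> tri" where
  "add3 m s = (fst m + fst s, fst (snd m) + fst (snd s), snd (snd m) + snd (snd s))"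
definition sub3 :: "tri \<Rightarrow> tri \<Rightarrow> tri" where
  "sub3 m s = (fst m - fst s, fst (snd m) - fst (snd s), snd (snd m) - snd (snd s))"
definition le3 :: "tri \<Rightarrow> tri \<Rightarrow> bool" where
  "le3 s m \<longleftrightarrow> fst s \<le> fst m \<and> fst (snd s) \<le> fst (snd m) \<and> snd (snd s) \<le> snd (snd m)"
definition shift :: "tri \<Rightarrow> (tri \<Rightarrow> real) \<Rightarrow> (tri \<Rightarrow> real)" where
  "shift s c = (\<lambda>u. if le3 s u then c (sub3 u s) else 0)"

lemma ev_sup:
  assumes "finite T" "{m. c m \<noteq> 0} \<subseteq> T"
  shows "ev c p = (\<Sum>m\<in>T. c m * mon m p)"
proof -
  have "ev c p = (\<Sum>m\<in>{m. c m \<noteq> 0}. c m * mon m p)" unfolding ev_def mon_def by (simp add: mult.assoc)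
  also have "\<dots> = (\<Sum>m\<in>T. c m * mon m p)"
    by (rule sum.mono_neutral_left) (use assms in auto)
  finally show ?thesis .
qed

lemma mon_add3: "mon (add3 m s) p = mon m p * mon s p"
  unfolding mon_def add3_def by (simp add: power_add)

lemma shift_add3 [simp]: "shift s c (add3 m s) = c m"
  unfolding shift_def add3_def le3_def sub3_def by simp

lemma supp_shift: "{u. shift s c u \<noteq> 0} \<subseteq> (\<lambda>m. add3 m s) ` {m. c m \<noteq> 0}"
proof
  fix u assume "u \<in> {u. shift s c u \<noteq> 0}"
  then have "le3 s u" "c (sub3 u s) \<noteq> 0" unfolding shift_def by (auto split: if_splits)
  moreover have "u = add3 (sub3 u s) s" using \<open>le3 s u\<close>
    unfolding le3_def add3_def sub3_def by (cases u) auto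
  ultimately show "u \<in> (\<lambda>m. add3 m s) ` {m. c m \<noteq> 0}" by blast
qed

lemma fin_shift: "finite {m. c m \<noteq> 0} \<Longrightarrow> finite {u. shift s c u \<noteq> 0}"
  using supp_shift finite_subset by blast

lemma inj_add3: "inj_on (\<lambda>m. add3 m s) A"
  unfolding inj_on_def add3_def by auto

lemma ev_shift:
  assumes "finite {m. c m \<noteq> 0}"
  shows "ev (shift s c) p = mon s p * ev c p"
proof -
  have "ev (shift s c) p = (\<Sum>u\<in>(\<lambda>m. add3 m s) ` {m. c m \<noteq> 0}. shift s c u * mon u p)"
    by (rule ev_sup) (use assms supp_shift in auto)
  also have "\<dots> = (\<Sum>m\<in>{m. c m \<noteq> 0}. c m * mon m p * mon s p)"
    by (subst sum.reindex[OF inj_add3]) (simp add: mon_add3 mult.assoc)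
  also have "\<dots> = mon s p * ev c p"
    by (subst ev_sup[OF assms, of c]) (auto simp: sum_distrib_left mult.commute mult.left_commute)
  finally show ?thesis .
qed

lemma fin_plus: "finite {m. c m \<noteq> 0} \<Longrightarrow> finite {m. d m \<noteq> 0} \<Longrightarrow> finite {m. c m + d m \<noteq> (0::real)}"
  by (rule finite_subset[of _ "{m. c m \<noteq> 0} \<union> {m. d m \<noteq> 0}"]) auto
lemma fin_minus: "finite {m. c m \<noteq> 0} \<Longrightarrow> finite {m. d m \<noteq> 0} \<Longrightarrow> finite {m. c m - d m \<noteq> (0::real)}"
  by (rule finite_subset[of _ "{m. c m \<noteq> 0} \<union> {m. d m \<noteq> 0}"]) auto

lemma ev_plus:
  assumes "finite {m. c m \<noteq> 0}" "finite {m. d m \<noteq> 0}"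
  shows "ev (\<lambda>m. c m + d m) p = ev c p + ev d p"
proof -
  let ?T = "{m. c m \<noteq> 0} \<union> {m. d m \<noteq> 0}"
  have "ev (\<lambda>m. c m + d m) p = (\<Sum>m\<in>?T. (c m + d m) * mon m p)" by (rule ev_sup) (use assms in auto)
  also have "\<dots> = (\<Sum>m\<in>?T. c m * mon m p) + (\<Sum>m\<in>?T. d m * mon m p)"
    by (simp add: distrib_right sum.distrib)
  also have "\<dots> = ev c p + ev d p"
    by (subst (1 2) ev_sup[where T = ?T]) (use assms in auto)
  finally show ?thesis .
qed

lemma ev_minus:
  assumes "finite {m. c m \<noteq> 0}" "finite {m. d m \<noteq> 0}"
  shows "ev (\<lambda>m. c m - d m) p = ev c p - ev d p"
proof -
  let ?T = "{m. c m \<noteq> 0} \<union> {m. d m \<noteq> 0}"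
  have "ev (\<lambda>m. c m - d m) p = (\<Sum>m\<in>?T. (c m - d m) * mon m p)" by (rule ev_sup) (use assms in auto)
  also have "\<dots> = (\<Sum>m\<in>?T. c m * mon m p) - (\<Sum>m\<in>?T. d m * mon m p)"
    by (simp add: left_diff_distrib sum_subtractf)
  also have "\<dots> = ev c p - ev d p"
    by (subst (1 2) ev_sup[where T = ?T]) (use assms in auto)
  finally show ?thesis .
qed

lemma powi_shift:
  fixes x :: real
  assumes "x \<noteq> 0" "e + int K \<ge> 0"
  shows "x powi e * x ^ K = x ^ nat (e + int K)"
proof -
  have "x powi (e + int K) = x powi e * x powi int K" by (rule power_int_add) (use assms in auto)
  moreover have "x powi (e + int K) = x ^ nat (e + int K)"
    using assms(2) by (metis nat_0_le power_int_of_nat)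
  ultimately show ?thesis by simp
qed

lemma shift_eq_le:
  assumes "shift s' c = shift s c'" "c' m \<noteq> 0"
  shows "le3 s' (add3 m s)"
proof -
  have "shift s' c (add3 m s) \<noteq> 0" using assms by simp
  thus ?thesis unfolding shift_def by (auto split: if_splits)
qed

definition Dn :: "int \<times> int \<times> int \<Rightarrow> (nat \<Rightarrow> real) \<Rightarrow> real" where
  "Dn d p = p 1 powi fst d * p 2 powi fst (snd d) * p 3 powi snd (snd d)"

lemma dvec_unique:
  assumes A: "is_dvec z d" and B: "is_dvec z d'"
  shows "d = d'"
proof -
  obtain c where c: "finite {m. c m \<noteq> 0}" "\<exists>m. c m \<noteq> 0 \<and> fst m = 0"
    "\<exists>m. c m \<noteq> 0 \<and> fst (snd m) = 0" "\<exists>m. c m \<noteq> 0 \<and> snd (snd m) = 0"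
    "\<forall>p. posp p \<longrightarrow> z p = ev c p / Dn d p"
    using A unfolding is_dvec_def ev_def Dn_def by blast
  obtain c' where c': "finite {m. c' m \<noteq> 0}" "\<exists>m. c' m \<noteq> 0 \<and> fst m = 0"
    "\<exists>m. c' m \<noteq> 0 \<and> fst (snd m) = 0" "\<exists>m. c' m \<noteq> 0 \<and> snd (snd m) = 0"
    "\<forall>p. posp p \<longrightarrow> z p = ev c' p / Dn d' p"
    using B unfolding is_dvec_def ev_def Dn_def by blast
  define K where "K = nat (\<bar>fst d\<bar> + \<bar>fst (snd d)\<bar> + \<bar>snd (snd d)\<bar> + \<bar>fst d'\<bar> + \<bar>fst (snd d')\<bar> + \<bar>snd (snd d')\<bar>)"
  define sv where "sv = (\<lambda>e::int\<times>int\<times>int. (nat (fst e + int K), nat (fst (snd e) + int K), nat (snd (snd e) + int K)))"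
  have Kd: "fst e + int K \<ge> 0" "fst (snd e) + int K \<ge> 0" "snd (snd e) + int K \<ge> 0" if "e = d \<or> e = d'" for e
    using that unfolding K_def by auto
  have Dsv: "Dn e p * (p 1 * p 2 * p 3) ^ K = mon (sv e) p" if "e = d \<or> e = d'" "posp p" for e p
  proof -
    have pos: "p 1 \<noteq> 0" "p 2 \<noteq> 0" "p 3 \<noteq> 0" using that(2) unfolding posp_def by auto
    have "Dn e p * (p 1 * p 2 * p 3) ^ K =
      (p 1 powi fst e * p 1 ^ K) * (p 2 powi fst (snd e) * p 2 ^ K) * (p 3 powi snd (snd e) * p 3 ^ K)"
      unfolding Dn_def by (simp add: power_mult_distrib mult_ac)
    also have "\<dots> = mon (sv e) p" unfolding mon_def sv_def
      using powi_shift[OF pos(1) Kd(1)[OF that(1)]] powi_shift[OF pos(2) Kd(2)[OF that(1)]]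
        powi_shift[OF pos(3) Kd(3)[OF that(1)]] by simp
    finally show ?thesis .
  qed
  have Dnz: "Dn e p \<noteq> 0" if "posp p" for e p
    using that unfolding posp_def Dn_def by auto
  have eqp: "ev (shift (sv d') c) p = ev (shift (sv d) c') p" if p: "posp p" for p
  proof -
    have "ev c p / Dn d p = ev c' p / Dn d' p" using c(5) c'(5) p by metis
    then have E: "ev c p * Dn d' p = ev c' p * Dn d p" using Dnz[OF p, of d] Dnz[OF p, of d']
      by (simp add: divide_eq_eq)
    have "ev c p * (Dn d' p * (p 1 * p 2 * p 3) ^ K) = ev c' p * (Dn d p * (p 1 * p 2 * p 3) ^ K)"
      using E by (metis mult.assoc)
    then have "ev c p * mon (sv d') p = ev c' p * mon (sv d) p"
      by (simp only: Dsv[OF disjI1[OF refl] p] Dsv[OF disjI2[OF refl] p])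
    then show ?thesis
      by (simp add: ev_shift c(1) c'(1) mult.commute)
  qed
  define g where "g = (\<lambda>u. shift (sv d') c u - shift (sv d) c' u)"
  have fing: "finite {u. g u \<noteq> 0}" unfolding g_def by (intro fin_minus fin_shift c(1) c'(1))
  have "\<forall>p. posp p \<longrightarrow> (\<Sum>m\<in>{u. g u \<noteq> 0}. g m * p 1 ^ fst m * p 2 ^ fst (snd m) * p 3 ^ snd (snd m)) = 0"
  proof (intro allI impI)
    fix p assume p: "posp p"
    have "ev g p = ev (shift (sv d') c) p - ev (shift (sv d) c') p"
      unfolding g_def by (rule ev_minus) (intro fin_shift c(1) c'(1))+
    also have "\<dots> = 0" using eqp[OF p] by simp
    finally show "(\<Sum>m\<in>{u. g u \<noteq> 0}. g m * p 1 ^ fst m * p 2 ^ fst (snd m) * p 3 ^ snd (snd m)) = 0"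
      unfolding ev_def .
  qed
  from poly3[OF fing this] have "\<forall>u. g u = 0" by auto
  then have SE: "shift (sv d') c = shift (sv d) c'" unfolding g_def by auto
  have SE': "shift (sv d) c' = shift (sv d') c" using SE by simp
  obtain m1 where m1: "c m1 \<noteq> 0" "fst m1 = 0" using c(2) by blast
  obtain m2 where m2: "c m2 \<noteq> 0" "fst (snd m2) = 0" using c(3) by blast
  obtain m3 where m3: "c m3 \<noteq> 0" "snd (snd m3) = 0" using c(4) by blast
  obtain n1 where n1: "c' n1 \<noteq> 0" "fst n1 = 0" using c'(2) by blast
  obtain n2 where n2: "c' n2 \<noteq> 0" "fst (snd n2) = 0" using c'(3) by blast
  obtain n3 where n3: "c' n3 \<noteq> 0" "snd (snd n3) = 0" using c'(4) by blast
  have "fst (sv d') \<le> fst (sv d)" using shift_eq_le[OF SE n1(1)] n1(2) unfolding le3_def add3_def by simp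
  moreover have "fst (sv d) \<le> fst (sv d')" using shift_eq_le[OF SE' m1(1)] m1(2) unfolding le3_def add3_def by simp
  moreover have "fst (snd (sv d')) \<le> fst (snd (sv d))" using shift_eq_le[OF SE n2(1)] n2(2) unfolding le3_def add3_def by simp
  moreover have "fst (snd (sv d)) \<le> fst (snd (sv d'))" using shift_eq_le[OF SE' m2(1)] m2(2) unfolding le3_def add3_def by simp
  moreover have "snd (snd (sv d')) \<le> snd (snd (sv d))" using shift_eq_le[OF SE n3(1)] n3(2) unfolding le3_def add3_def by simp
  moreover have "snd (snd (sv d)) \<le> snd (snd (sv d'))" using shift_eq_le[OF SE' m3(1)] m3(2) unfolding le3_def add3_def by simp
  ultimately have "sv d = sv d'" by (simp add: prod_eq_iff)
  then show ?thesis using Kd[of d] Kd[of d'] unfolding sv_def by (auto simp: prod_eq_iff)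
qed

lemma dvec_eq: "is_dvec z d \<Longrightarrow> dvec z = d"
  unfolding dvec_def using dvec_unique by blast


fun uu :: "nat \<Rightarrow> nat \<Rightarrow> ratfun" where
  "uu na 0 = (\<lambda>p. p 1)"
| "uu na (Suc 0) = (\<lambda>p. p 3)"
| "uu na (Suc (Suc n)) = (\<lambda>p. ((uu na (Suc n) p)^2 + p 2 ^ na) / uu na n p)"

fun MM :: "nat \<Rightarrow> nat \<Rightarrow> tri \<Rightarrow> real" where
  "MM na 0 = (\<lambda>m. if m = (0,0,0) then 1 else 0)"
| "MM na (Suc 0) = (\<lambda>m. (if m = (0,0,2) then 1 else 0) + (if m = (0,na,0) then 1 else 0))"
| "MM na (Suc (Suc k)) = (\<lambda>m. shift (2,0,0) (MM na (Suc k)) m + shift (0,0,2) (MM na (Suc k)) m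
      + shift (0,na,0) (MM na (Suc k)) m - shift (2,0,2) (MM na k) m)"

lemma fin_MM: "finite {m. MM na k m \<noteq> 0}"
proof (induction na k rule: MM.induct)
  case (1 na) then show ?case by (rule finite_subset[of _ "{(0,0,0)}"]) auto
next
  case (2 na) then show ?case by (rule finite_subset[of _ "{(0,0,2),(0,na,0)}"]) auto
next
  case (3 na k)
  then show ?case by (simp only: MM.simps) (intro fin_minus fin_plus fin_shift; assumption)
qed

lemma ev_MM0: "ev (MM na 0) p = 1"
  by (subst ev_sup[where T = "{(0,0,0)}"]) (auto simp: mon_def)

lemma ev_MM1: assumes "na \<noteq> 0" shows "ev (MM na (Suc 0)) p = p 3 ^ 2 + p 2 ^ na"
  by (subst ev_sup[where T = "{(0,0,2),(0,na,0)}"]) (use assms in \<open>auto simp: mon_def\<close>)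

lemma ev_MM2: "ev (MM na (Suc (Suc k))) p =
   (mon (2,0,0) p + mon (0,0,2) p + mon (0,na,0) p) * ev (MM na (Suc k)) p - mon (2,0,2) p * ev (MM na k) p"
  by (simp only: MM.simps ev_minus ev_plus fin_minus fin_plus fin_shift fin_MM ev_shift) (simp add: algebra_simps)

lemma MM_coef: "na \<noteq> 0 \<Longrightarrow> MM na k (0,0,2*k) = 1 \<and> MM na k (0,na*k,0) = 1"
proof (induction na k rule: MM.induct)
  case (1 na) then show ?case by simp
next
  case (2 na) then show ?case by simp
next
  case (3 na k)
  then show ?case unfolding MM.simps shift_def le3_def sub3_def
    by (auto simp: algebra_simps)
qed

lemma uu_pos: "posp p \<Longrightarrow> uu na n p > 0"
  by (induction na n rule: uu.induct) (auto simp: posp_def intro!: divide_pos_pos add_pos_pos)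

lemma uu_rec: "posp p \<Longrightarrow> uu na (Suc (Suc n)) p * uu na n p = uu na (Suc n) p ^ 2 + p 2 ^ na"
  using uu_pos[of p na n] by simp

lemma uu_lin:
  assumes p: "posp p"
  shows "uu na (Suc (Suc n)) p + uu na n p = (p 1 ^ 2 + p 3 ^ 2 + p 2 ^ na) / (p 1 * p 3) * uu na (Suc n) p"
proof (induction n)
  case 0
  have "p 1 > 0" "p 3 > 0" using p by (auto simp: posp_def)
  then show ?case by (simp add: field_simps power2_eq_square)
next
  case (Suc n)
  define L where "L = (p 1 ^ 2 + p 3 ^ 2 + p 2 ^ na) / (p 1 * p 3)"
  let ?a = "uu na n p" and ?b = "uu na (Suc n) p" and ?c = "uu na (Suc (Suc n)) p"
  have b: "?b > 0" using uu_pos[OF p] .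
  have r: "?c * ?a = ?b ^ 2 + p 2 ^ na" by (rule uu_rec[OF p])
  have IH: "?c + ?a = L * ?b" using Suc unfolding L_def .
  have "uu na (Suc (Suc (Suc n))) p + ?b = (?c ^ 2 + p 2 ^ na) / ?b + ?b" by simp
  also have "\<dots> = (?c ^ 2 + p 2 ^ na + ?b ^ 2) / ?b" using b by (simp add: field_simps power2_eq_square)
  also have "\<dots> = ?c * (?c + ?a) / ?b" using r by (simp add: algebra_simps power2_eq_square)
  also have "\<dots> = L * ?c" using IH b by simp
  finally show ?case unfolding L_def .
qed

lemma uu_MM:
  assumes p: "posp p" and na: "na \<noteq> 0"
  shows "uu na (Suc k) p * p 1 ^ k * p 3 ^ k = ev (MM na k) p * p 3
       \<and> uu na (Suc (Suc k)) p * p 1 ^ Suc k * p 3 ^ Suc k = ev (MM na (Suc k)) p * p 3"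
proof (induction k)
  case 0
  have "p 1 > 0" "p 3 > 0" using p by (auto simp: posp_def)
  then show ?case by (simp del: MM.simps add: ev_MM0 ev_MM1[OF na] field_simps)
next
  case (Suc k)
  have p1: "p 1 > 0" and p3: "p 3 > 0" using p by (auto simp: posp_def)
  define L where "L = (p 1 ^ 2 + p 3 ^ 2 + p 2 ^ na) / (p 1 * p 3)"
  define C where "C = p 1 ^ 2 + p 3 ^ 2 + p 2 ^ na"
  have LC: "L * (p 1 * p 3) = C" unfolding L_def C_def using p1 p3 by simp
  have H0: "uu na (Suc k) p * p 1 ^ k * p 3 ^ k = ev (MM na k) p * p 3" using Suc by blast
  have H1: "uu na (Suc (Suc k)) p * p 1 ^ Suc k * p 3 ^ Suc k = ev (MM na (Suc k)) p * p 3" using Suc by blast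
  have lin: "uu na (Suc (Suc (Suc k))) p = L * uu na (Suc (Suc k)) p - uu na (Suc k) p"
    using uu_lin[OF p, of na "Suc k"] unfolding L_def by simp
  have "uu na (Suc (Suc (Suc k))) p * p 1 ^ Suc (Suc k) * p 3 ^ Suc (Suc k)
      = (L * (p 1 * p 3)) * (uu na (Suc (Suc k)) p * p 1 ^ Suc k * p 3 ^ Suc k)
        - (p 1 ^ 2 * p 3 ^ 2) * (uu na (Suc k) p * p 1 ^ k * p 3 ^ k)"
    unfolding lin by (simp add: algebra_simps power2_eq_square)
  also have "\<dots> = (C * ev (MM na (Suc k)) p - p 1 ^ 2 * p 3 ^ 2 * ev (MM na k) p) * p 3"
    unfolding LC H0 H1 by (simp add: algebra_simps)
  also have "\<dots> = ev (MM na (Suc (Suc k))) p * p 3"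
    unfolding ev_MM2 C_def by (simp add: mon_def power2_eq_square)
  finally show ?case using H1 by blast
qed

lemma uu_dvec:
  assumes na: "na \<noteq> 0"
  shows "is_dvec (uu na (Suc k)) (int k, 0, int k - 1)"
  unfolding is_dvec_def
proof (intro exI conjI allI impI)
  show "finite {m. MM na k m \<noteq> 0}" by (rule fin_MM)
  show "MM na k (0,0,2*k) \<noteq> 0" "fst (0::nat,0::nat,2*k) = 0" using MM_coef[OF na, of k] by auto
  show "MM na k (0,0,2*k) \<noteq> 0" "fst (snd (0::nat,0::nat,2*k)) = 0" using MM_coef[OF na, of k] by auto
  show "MM na k (0,na*k,0) \<noteq> 0" "snd (snd (0::nat,na*k,0::nat)) = 0" using MM_coef[OF na, of k] by auto
next
  fix p assume p: "posp p"
  have p1: "p 1 > 0" and p3: "p 3 > 0" using p by (auto simp: posp_def)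
  have e: "p 3 powi (int k - 1) = p 3 ^ k / p 3"
    using p3 by (simp add: power_int_diff)
  have "uu na (Suc k) p = ev (MM na k) p * p 3 / (p 1 ^ k * p 3 ^ k)"
    using conjunct1[OF uu_MM[OF p na, of k]] p1 p3 by (simp add: field_simps)
  also have "\<dots> = ev (MM na k) p / (p 1 powi int k * p 2 powi 0 * p 3 powi (int k - 1))"
    unfolding e using p3 by (simp add: field_simps)
  finally show "uu na (Suc k) p = (\<Sum>m\<in>{m. MM na k m \<noteq> 0}. MM na k m * p 1 ^ fst m * p 2 ^ fst (snd m) * p 3 ^ snd (snd m)) /
         (p 1 powi fst (int k, 0::int, int k - 1) * p 2 powi fst (snd (int k, 0::int, int k - 1)) * p 3 powi snd (snd (int k, 0::int, int k - 1)))"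
    unfolding ev_def by simp
qed


lemma mm1: assumes "a \<ge> 3" shows "mut_mat 1 (Amat a) = (\<lambda>i j. - Amat a i j)"
  using assms by (auto simp: mut_mat_def Amat_def fun_eq_iff sgn_if max_def)

lemma mm3: assumes "a \<ge> 3" shows "mut_mat 3 (\<lambda>i j. - Amat a i j) = Amat a"
  using assms by (auto simp: mut_mat_def Amat_def fun_eq_iff sgn_if max_def)

lemma mc1: assumes "a \<ge> 3"
  shows "mut_clu 1 (Amat a) x = x(1 := (\<lambda>p. (x 3 p ^ 2 + x 2 p ^ nat a) / x 1 p))"
proof -
  have s1: "{i\<in>{1,2,3}. Amat a i 1 > 0} = {3}" using assms by (auto simp: Amat_def)
  have s2: "{i\<in>{1,2,3}. Amat a i 1 < 0} = {2}" using assms by (auto simp: Amat_def)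
  show ?thesis unfolding mut_clu_def s1 s2 by (simp add: Amat_def)
qed

lemma mc3: assumes "a \<ge> 3"
  shows "mut_clu 3 (\<lambda>i j. - Amat a i j) x = x(3 := (\<lambda>p. (x 1 p ^ 2 + x 2 p ^ nat a) / x 3 p))"
proof -
  have s1: "{i\<in>{1,2,3}. - Amat a i 3 > 0} = {1}" using assms by (auto simp: Amat_def)
  have s2: "{i\<in>{1,2,3}. - Amat a i 3 < 0} = {2}" using assms by (auto simp: Amat_def)
  show ?thesis unfolding mut_clu_def s1 s2 by (simp add: Amat_def)
qed

definition CC :: "nat \<Rightarrow> nat \<Rightarrow> cluster" where
  "CC na k = (\<lambda>i. if i = 1 then uu na (if even k then k else Suc k)
                 else if i = 3 then uu na (if even k then Suc k else k) else init_clu i)"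

lemma alt31_Suc: "alt31 (Suc k) = (if even k then 1 else 3) # alt31 k"
  unfolding alt31_def by simp

lemma path_Cons: "path_seed (x # ks) s = mut_seed x (path_seed ks s)"
  unfolding path_seed_def by simp

lemma path_inv:
  assumes "a \<ge> 3"
  shows "path_seed (alt31 k) (init_clu, Amat a) =
     (CC (nat a) k, if even k then Amat a else (\<lambda>i j. - Amat a i j))"
proof (induction k)
  case 0
  have "CC (nat a) 0 = init_clu" unfolding CC_def init_clu_def by (auto simp: fun_eq_iff)
  then show ?case by (simp add: alt31_def path_seed_def)
next
  case (Suc k)
  show ?case
  proof (cases "even k")
    case True
    have "mut_clu 1 (Amat a) (CC (nat a) k) = CC (nat a) (Suc k)"
      unfolding mc1[OF assms] using True by (auto simp: CC_def fun_eq_iff init_clu_def)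
    then show ?thesis using True
      by (simp add: alt31_Suc path_Cons Suc mut_seed_def mm1[OF assms, simplified])
  next
    case False
    have "mut_clu 3 (\<lambda>i j. - Amat a i j) (CC (nat a) k) = CC (nat a) (Suc k)"
      unfolding mc3[OF assms] using False by (auto simp: CC_def fun_eq_iff init_clu_def)
    then show ?thesis using False
      by (simp add: alt31_Suc path_Cons Suc mut_seed_def mm3[OF assms])
  qed
qed

lemma var_uu:
  assumes "a \<ge> 3"
  shows "var (Amat a) (alt31 (Suc j)) = uu (nat a) (Suc (Suc j))"
  unfolding var_def path_inv[OF assms] by (simp add: alt31_Suc CC_def)

theorem mainTheorem17:
  fixes a :: int and k :: nat
  assumes "a \<ge> 3" and "k \<ge> 1"
  shows "dless (dvec (var (Amat a) (alt31 k))) (dvec (var (Amat a) (alt31 (Suc k))))"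
proof -
  obtain j where j: "k = Suc j" using assms(2) by (cases k) auto
  have na: "nat a \<noteq> 0" using assms(1) by simp
  have d1: "dvec (var (Amat a) (alt31 k)) = (int (Suc j), 0, int (Suc j) - 1)"
    unfolding j var_uu[OF assms(1)] by (rule dvec_eq[OF uu_dvec[OF na]])
  have d2: "dvec (var (Amat a) (alt31 (Suc k))) = (int (Suc (Suc j)), 0, int (Suc (Suc j)) - 1)"
    unfolding j var_uu[OF assms(1)] by (rule dvec_eq[OF uu_dvec[OF na]])
  show ?thesis unfolding d1 d2 dless_def by simp
qed

end
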